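(* Let $n\ge2$, $F(a)=\sum_{k=0}^nA_ka^k$ with $A_n=1$, let $x(a)$ be smooth, and set $b_k=\sum_{s=1}^k\frac{F^{(k-s)}}{(k-s)!}\frac{D_a^sx}{(1/2)_s}$ for $k=1,\dots,n$. With $H=\Pi^2+aP_y^2$ one has the identity $$\sum_{k=1}^n b_k\,\Pi^{2k-1}P_y^{2(n-k)+1}=\sum_{k=1}^n\tilde b_k\,H^{n-k}\,\Pi\,P_y^{2k-1},\qquad \tilde b_k=\sum_{s=1}^k\binom{n-s}{k-s}(-a)^{k-s}\,b_{n-s+1}.$$ If moreover $F=\prod_{i=1}^n(a-a_i)$ with distinct real $a_i$ and $x=\sum_{i=1}^n\xi_i\Delta_i^{-1/2}$ with $\Delta_i=\epsilon_i(a-a_i)>0$, $\epsilon_i\in\{\pm1\}$, $\xi_i\in\mathbb{R}$, then for all $k\in\{1,\dots,n\}$ $$\tilde b_k=(-1)^k\sum_{i=1}^n\frac{\xi_i}{\sqrt{\Delta_i}}\,\sigma^i_{k-1}.$$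
   Context: $D_a=d/da$, $F^{(m)}=D_a^mF$; Pochhammer $(z)_0=1$, $(z)_s=z(z+1)\cdots(z+s-1)$. For each $i$, the numbers $\sigma^i_m$ ($-1\le m\le n$) are defined by $\prod_{l\neq i}(a-a_l)=\sum_{m=0}^{n-1}(-1)^m\sigma^i_ma^{n-1-m}$ together with $\sigma^i_{-1}=\sigma^i_n=0$. *)

theory Defs
  imports "HOL-Analysis.Analysis" "HOL-Computational_Algebra.Polynomial"
begin

definition bcoef :: "real poly \<Rightarrow> (real \<Rightarrow> real) \<Rightarrow> nat \<Rightarrow> real \<Rightarrow> real" where
  "bcoef F x k a = (\<Sum>s=1..k. poly ((pderiv ^^ (k - s)) F) a / fact (k - s)
                        * (deriv ^^ s) x a / pochhammer (1/2) s)"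

definition btilde :: "nat \<Rightarrow> real poly \<Rightarrow> (real \<Rightarrow> real) \<Rightarrow> nat \<Rightarrow> real \<Rightarrow> real" where
  "btilde n F x k a = (\<Sum>s=1..k. real ((n - s) choose (k - s)) * (- a) ^ (k - s)
                        * bcoef F x (n - s + 1) a)"

text \<open>sigma n al i m: defined by prod_{l ~= i} (a - a_l) = sum_{m=0}^{n-1} (-1)^m sigma^i_m a^{n-1-m},
  with sigma^i_n = 0 (indices l range over 1..n).\<close>

definition sigma :: "nat \<Rightarrow> (nat \<Rightarrow> real) \<Rightarrow> nat \<Rightarrow> nat \<Rightarrow> real" where
  "sigma n al i m = (if m \<le> n - 1
     then (-1) ^ m * coeff (\<Prod>l\<in>{1..n} - {i}. [:- al l, 1:]) (n - 1 - m) else 0)"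

end

theory Submission imports Defs begin


lemma tri_swap: fixes n::nat and f :: "nat \<Rightarrow> nat \<Rightarrow> real" shows "(\<Sum>k=1..n. \<Sum>s=1..k. f k s) = (\<Sum>s=1..n. \<Sum>k=s..n. (f k s::real))"
proof (induction n)
  case 0 then show ?case by simp
next
  case (Suc n)
  have "(\<Sum>s=1..Suc n. \<Sum>k=s..Suc n. f k s) = (\<Sum>s=1..Suc n. (\<Sum>k=s..n. f k s) + f (Suc n) s)"
    by (rule sum.cong) (auto simp: sum.cl_ivl_Suc)
  also have "\<dots> = (\<Sum>s=1..n. \<Sum>k=s..n. f k s) + (\<Sum>s=1..Suc n. f (Suc n) s)"
    by (simp add: sum.distrib)
  finally show ?case using Suc by simp
qed

lemma inner_binom:
  fixes U V H a :: real
  assumes "H = U + a*V" "s \<le> n"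
  shows "(\<Sum>k=s..n. real ((n-s) choose (k-s)) * (-a*V)^(k-s) * H^(n-k)) = U^(n-s)"
proof -
  have "U^(n-s) = ((-a*V) + H)^(n-s)" using assms by simp
  also have "\<dots> = (\<Sum>p\<le>n-s. real ((n-s) choose p) * (-a*V)^p * H^(n-s-p))"
    by (rule binomial_ring)
  also have "\<dots> = (\<Sum>k=s..n. real ((n-s) choose (k-s)) * (-a*V)^(k-s) * H^(n-k))"
    by (rule sum.reindex_bij_witness[of _ "\<lambda>k. k - s" "\<lambda>p. p + s"]) (use assms(2) in \<open>auto simp: add.commute\<close>)
  finally show ?thesis by simp
qed

lemma part1:
  fixes b :: "nat \<Rightarrow> real" and Pi Py a :: real
  shows "(\<Sum>k=1..n. b k * Pi ^ (2*k - 1) * Py ^ (2*(n - k) + 1))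
       = (\<Sum>k=1..n. (\<Sum>s=1..k. real ((n - s) choose (k - s)) * (- a) ^ (k - s) * b (n - s + 1))
             * (Pi\<^sup>2 + a * Py\<^sup>2) ^ (n - k) * Pi * Py ^ (2*k - 1))"
proof -
  define U where "U = Pi^2"
  define V where "V = Py^2"
  define H where "H = U + a*V"
  have "(\<Sum>k=1..n. (\<Sum>s=1..k. real ((n - s) choose (k - s)) * (- a) ^ (k - s) * b (n - s + 1))
             * (Pi\<^sup>2 + a * Py\<^sup>2) ^ (n - k) * Pi * Py ^ (2*k - 1))
     = (\<Sum>k=1..n. \<Sum>s=1..k. b (n - s + 1) * Pi * Py * V^(s-1) *
           (real ((n - s) choose (k - s)) * (- a*V) ^ (k - s) * H^(n-k)))"
  proof (rule sum.cong[OF refl])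
    fix k assume k: "k \<in> {1..n}"
    have e: "2*k-1 = Suc (2*(k-1))" using k by auto
    have "Py ^ (2*k-1) = Py * V^(k-1)" unfolding e V_def by (simp add: power_mult)
    then show "(\<Sum>s=1..k. real ((n - s) choose (k - s)) * (- a) ^ (k - s) * b (n - s + 1))
             * (Pi\<^sup>2 + a * Py\<^sup>2) ^ (n - k) * Pi * Py ^ (2*k - 1) =
          (\<Sum>s=1..k. b (n - s + 1) * Pi * Py * V^(s-1) *
           (real ((n - s) choose (k - s)) * (- a*V) ^ (k - s) * H^(n-k)))"
      unfolding sum_distrib_right
    proof (intro sum.cong[OF refl])
      fix s assume s: "s \<in> {1..k}"
      have "V^(k-1) = V^(s-1) * V^(k-s)" using s by (simp add: power_add[symmetric])
      then have A: "Py^(2*k-1) = Py * V^(s-1) * V^(k-s)"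
        using \<open>Py ^ (2*k-1) = Py * V^(k-1)\<close> by simp
      have B: "(-a*V)^(k-s) = (-a)^(k-s) * V^(k-s)" by (metis mult_minus_left power_mult_distrib)
      have Hh: "Pi\<^sup>2 + a * Py\<^sup>2 = H" by (simp add: H_def U_def V_def)
      show "real ((n - s) choose (k - s)) * (- a) ^ (k - s) * b (n - s + 1) *
         (Pi\<^sup>2 + a * Py\<^sup>2) ^ (n - k) * Pi * Py ^ (2 * k - 1) =
         b (n - s + 1) * Pi * Py * V ^ (s - 1) *
         (real ((n - s) choose (k - s)) * (- a * V) ^ (k - s) * H ^ (n - k))"
        unfolding A B Hh by (simp only: mult_ac)
    qed
  qed
  also have "\<dots> = (\<Sum>s=1..n. \<Sum>k=s..n. b (n - s + 1) * Pi * Py * V^(s-1) *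
           (real ((n - s) choose (k - s)) * (- a*V) ^ (k - s) * H^(n-k)))"
    by (rule tri_swap)
  also have "\<dots> = (\<Sum>s=1..n. b (n - s + 1) * Pi * Py * V^(s-1) * U^(n-s))"
  proof (rule sum.cong[OF refl])
    fix s assume s: "s \<in> {1..n}"
    have "(\<Sum>k=s..n. real ((n - s) choose (k - s)) * (- a*V) ^ (k - s) * H^(n-k)) = U^(n-s)"
      by (rule inner_binom) (use s H_def in auto)
    then show "(\<Sum>k=s..n. b (n - s + 1) * Pi * Py * V^(s-1) *
           (real ((n - s) choose (k - s)) * (- a*V) ^ (k - s) * H^(n-k))) = b (n - s + 1) * Pi * Py * V^(s-1) * U^(n-s)"
      by (simp only: sum_distrib_left[symmetric])
  qed
  also have "\<dots> = (\<Sum>r=1..n. b r * Pi * Py * V^(n-r) * U^(r-1))"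
    by (rule sum.reindex_bij_witness[of _ "\<lambda>r. n+1-r" "\<lambda>s. n+1-s"]) (auto simp: Suc_diff_le)
  also have "\<dots> = (\<Sum>k=1..n. b k * Pi ^ (2*k - 1) * Py ^ (2*(n - k) + 1))"
  proof (rule sum.cong[OF refl])
    fix k assume k: "k \<in> {1..n}"
    have e: "2*k-1 = Suc (2*(k-1))" using k by auto
    have P1: "Pi ^ (2*k-1) = Pi * U^(k-1)" and P2: "Py ^ (2*(n - k) + 1) = Py * V^(n-k)"
      unfolding e U_def V_def by (simp_all add: power_mult)
    show "b k * Pi * Py * V^(n-k) * U^(k-1) = b k * Pi ^ (2*k - 1) * Py ^ (2*(n - k) + 1)"
      unfolding P1 P2 by (simp only: mult_ac)
  qed
  finally show ?thesis by simp
qed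



lemma pderiv_lin: "pderiv [:c, 1::real:] = 1"
  by (simp add: pderiv_pCons)

lemma higher_pderiv_comp:
  "(pderiv ^^ j) (p \<circ>\<^sub>p [:c, 1::real:]) = ((pderiv ^^ j) p) \<circ>\<^sub>p [:c, 1:]"
  by (induction j) (simp_all add: pderiv_pcompose pderiv_lin)

lemma T1: "poly ((pderiv ^^ j) p) c / fact j = coeff (p \<circ>\<^sub>p [:c, 1::real:]) j"
proof -
  have "coeff ((pderiv ^^ j) (p \<circ>\<^sub>p [:c, 1:])) 0 = fact j * coeff (p \<circ>\<^sub>p [:c, 1::real:]) j"
    by (simp add: coeff_higher_pderiv pochhammer_fact)
  moreover have "coeff ((pderiv ^^ j) (p \<circ>\<^sub>p [:c, 1:])) 0 = poly ((pderiv ^^ j) p) c"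
    by (simp add: higher_pderiv_comp poly_0_coeff_0[symmetric] poly_pcompose)
  ultimately show ?thesis by (simp add: field_simps)
qed

lemma poly_sum_bound:
  fixes p :: "real poly"
  assumes "degree p \<le> N"
  shows "poly p x = (\<Sum>i\<le>N. coeff p i * x ^ i)"
proof -
  have "poly p x = (\<Sum>i\<le>degree p. coeff p i * x ^ i)" by (rule poly_altdef)
  also have "\<dots> = (\<Sum>i\<le>N. coeff p i * x ^ i)"
    by (rule sum.mono_neutral_left) (use assms le_degree in auto)
  finally show ?thesis .
qed

lemma coeff_shift:
  fixes r :: "real poly"
  assumes "degree r \<le> m + N"
  shows "coeff (r \<circ>\<^sub>p [:b, 1:]) m = (\<Sum>i\<le>N. real ((i+m) choose m) * coeff r (i+m) * b^i)"
proof -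
  have "coeff (r \<circ>\<^sub>p [:b, 1:]) m = poly ((pderiv ^^ m) r) b / fact m" by (simp add: T1)
  also have "poly ((pderiv ^^ m) r) b = (\<Sum>i\<le>N. coeff ((pderiv ^^ m) r) i * b ^ i)"
    by (rule poly_sum_bound) (use assms in \<open>simp add: degree_higher_pderiv\<close>)
  also have "\<dots> / fact m = (\<Sum>i\<le>N. real ((i+m) choose m) * coeff r (i+m) * b^i)"
    unfolding sum_divide_distrib
  proof (rule sum.cong[OF refl])
    fix i
    have P: "pochhammer (1 + real i) m / fact m = real ((i+m) choose m)"
      by (simp add: binomial_gbinomial gbinomial_pochhammer' of_nat_diff) (simp add: add.commute)
    then show "coeff ((pderiv ^^ m) r) i * b ^ i / fact m = real ((i+m) choose m) * coeff r (i+m) * b^i"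
      unfolding coeff_higher_pderiv by (simp add: P[symmetric] add.commute)
  qed
  finally show ?thesis .
qed

lemma claimC:
  fixes G :: "real poly"
  assumes "degree G \<le> n - 1" "1 \<le> k" "k \<le> n"
  shows "(\<Sum>s=1..k. real ((n-s) choose (k-s)) * (-a)^(k-s) * coeff (G \<circ>\<^sub>p [:a, 1:]) (n-s))
         = coeff G (n-k)"
proof -
  define Gt where "Gt = G \<circ>\<^sub>p [:a, 1:]"
  have L: "[:a, 1:] \<circ>\<^sub>p [:-a, 1::real:] = [:0, 1:]" by (simp add: pcompose_pCons)
  have GG: "G = Gt \<circ>\<^sub>p [:-a, 1:]"
    unfolding Gt_def pcompose_assoc[symmetric] L by simp
  have dG: "degree Gt = degree G" by (simp add: Gt_def degree_pcompose)
  have "coeff G (n-k) = (\<Sum>i\<le>k-1. real ((i+(n-k)) choose (n-k)) * coeff Gt (i+(n-k)) * (-a)^i)"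
    unfolding GG by (rule coeff_shift) (use assms dG in auto)
  also have "\<dots> = (\<Sum>s=1..k. real ((n-s) choose (k-s)) * (-a)^(k-s) * coeff Gt (n-s))"
  proof (rule sum.reindex_bij_witness[of _ "\<lambda>s. k - s" "\<lambda>i. k - i"])
    fix i assume i: "i \<in> {..k-1}"
    define s where "s = k - i"
    have s1: "1 \<le> s" "s \<le> k" "i = k - s" using i assms unfolding s_def by auto
    have e: "i + (n - k) = n - s" using s1 assms by auto
    have "(n-s) choose (k-s) = (n-s) choose ((n-s)-(k-s))" by (rule binomial_symmetric) (use s1 assms in auto)
    moreover have "(n-s)-(k-s) = n-k" using s1 assms by auto
    ultimately have "(n-s choose (n-k)) = (n-s choose (k-s))" by simp
    then show "real ((n-(k-i)) choose (k-(k-i))) * (-a)^(k-(k-i)) * coeff Gt (n-(k-i))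
       = real ((i + (n-k)) choose (n-k)) * coeff Gt (i + (n-k)) * (-a)^i"
      unfolding e s_def[symmetric] s1(3)[symmetric] by simp
  qed (use assms in auto)
  finally show ?thesis by (simp add: Gt_def)
qed

lemma coeff_lin_mult:
  fixes Gt :: "real poly"
  shows
  "coeff ([:d, 1:] * Gt) 0 = d * coeff Gt 0"
  "coeff ([:d, 1:] * Gt) (Suc j) = d * coeff Gt (Suc j) + coeff Gt j"
  by (auto simp: mult_pCons_left)

lemma claimT:
  fixes Gt :: "real poly" and d :: real
  assumes "d \<noteq> 0"
  shows "(\<Sum>s\<le>k. coeff ([:d, 1:] * Gt) (k-s) * (-1/d)^s) = d * coeff Gt k"
proof (induction k)
  case 0 then show ?case by (simp add: coeff_lin_mult)
next
  case (Suc k)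
  have "(\<Sum>s\<le>Suc k. coeff ([:d, 1:] * Gt) (Suc k-s) * (-1/d)^s)
      = coeff ([:d, 1:] * Gt) (Suc k) + (-1/d) * (\<Sum>s\<le>k. coeff ([:d, 1:] * Gt) (k-s) * (-1/d)^s)"
    by (simp only: sum.atMost_Suc_shift diff_Suc_Suc power_Suc diff_zero power_0 mult_1_right)
       (simp add: sum_distrib_left mult_ac)
  also have "\<dots> = d * coeff Gt (Suc k)" using Suc assms by (simp add: field_simps coeff_lin_mult)
  finally show ?case .
qed

lemma claimT2:
  fixes Gt :: "real poly" and d :: real
  assumes "d \<noteq> 0" "1 \<le> m"
  shows "(\<Sum>s=1..m. coeff ([:d, 1:] * Gt) (m-s) * (-1/d)^s) = - coeff Gt (m-1)"
proof -
  obtain k where m: "m = Suc k" using assms by (cases m) auto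
  have "(\<Sum>s=1..m. coeff ([:d, 1:] * Gt) (m-s) * (-1/d)^s)
     = (\<Sum>s\<le>k. coeff ([:d, 1:] * Gt) (k-s) * (-1/d)^(Suc s))"
    unfolding m by (simp only: One_nat_def sum.shift_bounds_cl_Suc_ivl atLeast0AtMost diff_Suc_Suc)
  also have "\<dots> = (-1/d) * (\<Sum>s\<le>k. coeff ([:d, 1:] * Gt) (k-s) * (-1/d)^s)"
    by (simp add: sum_distrib_left mult_ac)
  also have "\<dots> = - coeff Gt (m-1)" using claimT[OF assms(1), where k=k and Gt=Gt] m assms(1) by simp
  finally show ?thesis .
qed



lemma deriv_x:
  fixes n :: nat and al eps xi :: "nat \<Rightarrow> real"
  defines "x \<equiv> \<lambda>t. \<Sum>i=1..n. xi i / sqrt (eps i * (t - al i))"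
  defines "S0 \<equiv> {t. \<forall>i\<in>{1..n}. 0 < eps i * (t - al i)}"
  defines "g \<equiv> \<lambda>s t. \<Sum>i=1..n. xi i * ((-1)^s * pochhammer (1/2) s * eps i ^ s)
                    * (eps i * (t - al i)) powr (-(1/2) - real s)"
  shows "\<forall>t\<in>S0. (deriv ^^ s) x t = g s t"
proof -
  have S0eq: "S0 = (\<Inter>i\<in>{1..n}. {t. 0 < eps i * (t - al i)})" unfolding S0_def by auto
  have opS: "open S0" unfolding S0eq
    by (intro open_INT finite_atLeastAtMost ballI open_Collect_less continuous_intros)
  have D: "((g s) has_real_derivative g (Suc s) t) (at t)" if t: "t \<in> S0" for s t
  proof -
    have "((\<lambda>t. \<Sum>i=1..n. xi i * ((-1)^s * pochhammer (1/2) s * eps i ^ s)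
                    * (eps i * (t - al i)) powr (-(1/2) - real s)) has_real_derivative
          (\<Sum>i=1..n. xi i * ((-1)^s * pochhammer (1/2) s * eps i ^ s)
                    * ((-(1/2) - real s) * (eps i * (t - al i)) powr (-(1/2) - real s - of_nat 1) * eps i))) (at t)"
    proof (intro DERIV_sum DERIV_cmult DERIV_fun_powr)
      fix i assume i: "i \<in> {1..n}"
      show "((\<lambda>t. eps i * (t - al i)) has_real_derivative eps i) (at t)"
        by (auto intro!: derivative_eq_intros)
      show "0 < eps i * (t - al i)" using t i unfolding S0_def by auto
    qed
    also have "(\<Sum>i=1..n. xi i * ((-1)^s * pochhammer (1/2) s * eps i ^ s)
                    * ((-(1/2) - real s) * (eps i * (t - al i)) powr (-(1/2) - real s - of_nat 1) * eps i))
        = g (Suc s) t"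
      unfolding g_def
    proof (rule sum.cong[OF refl])
      fix i
      have e: "-(1/2) - real s - of_nat 1 = -(1/2) - real (Suc s)" by simp
      show "xi i * ((-1)^s * pochhammer (1/2) s * eps i ^ s)
                    * ((-(1/2) - real s) * (eps i * (t - al i)) powr (-(1/2) - real s - of_nat 1) * eps i)
          = xi i * ((-1)^(Suc s) * pochhammer (1/2) (Suc s) * eps i ^ (Suc s))
                    * (eps i * (t - al i)) powr (-(1/2) - real (Suc s))"
        unfolding e by (simp add: pochhammer_Suc algebra_simps)
    qed
    finally show ?thesis unfolding g_def .
  qed
  show ?thesis
  proof (induction s)
    case 0
    show ?case
    proof
      fix t assume t: "t \<in> S0"
      show "(deriv ^^ 0) x t = g 0 t"
        unfolding x_def g_def funpow_0
      proof (rule sum.cong[OF refl])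
        fix i assume i: "i \<in> {1..n}"
        have p: "0 < eps i * (t - al i)" using t i unfolding S0_def by auto
        have "(eps i * (t - al i)) powr (-(1/2) - real 0) = 1 / sqrt (eps i * (t - al i))"
          using p by (simp add: powr_minus_divide powr_half_sqrt)
        then show "xi i / sqrt (eps i * (t - al i)) =
            xi i * ((-1)^0 * pochhammer (1/2) 0 * eps i ^ 0) * (eps i * (t - al i)) powr (-(1/2) - real 0)"
          by simp
      qed
    qed
  next
    case (Suc s)
    show ?case
    proof
      fix t assume t: "t \<in> S0"
      have "((deriv ^^ s) x has_real_derivative g (Suc s) t) (at t)"
        by (rule has_field_derivative_transform_within_open[OF D[OF t] opS t]) (use Suc in auto)
      then show "(deriv ^^ Suc s) x t = g (Suc s) t"
        by (simp add: DERIV_imp_deriv)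
    qed
  qed
qed



lemma part2:
  fixes n :: nat and al eps xi :: "nat \<Rightarrow> real" and a :: real
  assumes eps: "\<forall>i\<in>{1..n}. eps i = 1 \<or> eps i = -1"
    and pos: "\<forall>i\<in>{1..n}. eps i * (a - al i) > 0" and k: "k \<in> {1..n}"
  shows "btilde n (\<Prod>i\<in>{1..n}. [:- al i, 1:])
              (\<lambda>t. \<Sum>i=1..n. xi i / sqrt (eps i * (t - al i))) k a
       = (-1) ^ k * (\<Sum>i=1..n. xi i / sqrt (eps i * (a - al i)) * sigma n al i (k - 1))"
proof -
  define F where "F = (\<Prod>i\<in>{1..n}. [:- al i, 1:])"
  define x where "x = (\<lambda>t. \<Sum>i=1..n. xi i / sqrt (eps i * (t - al i)))"
  define w where "w = (\<lambda>i. xi i / sqrt (eps i * (a - al i)))"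
  define G where "G = (\<lambda>i. \<Prod>l\<in>{1..n} - {i}. [:- al l, 1::real:])"
  define Gt where "Gt = (\<lambda>i. G i \<circ>\<^sub>p [:a, 1:])"
  have aS: "a \<in> {t. \<forall>i\<in>{1..n}. 0 < eps i * (t - al i)}" using pos by auto
  have hE: "(deriv ^^ s) x a / pochhammer (1/2) s = (\<Sum>i=1..n. w i * (-1/(a - al i))^s)" for s
  proof -
    have "(deriv ^^ s) x a = (\<Sum>i=1..n. xi i * ((-1)^s * pochhammer (1/2) s * eps i ^ s)
                    * (eps i * (a - al i)) powr (-(1/2) - real s))"
      using deriv_x[where xi=xi and eps=eps and al=al and n=n and s=s] aS unfolding x_def by blast
    moreover have P: "pochhammer (1/2::real) s > 0" by (rule pochhammer_pos) simp
    ultimately have "(deriv ^^ s) x a / pochhammer (1/2) s =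
       (\<Sum>i=1..n. xi i * ((-1)^s * eps i ^ s) * (eps i * (a - al i)) powr (-(1/2) - real s))"
      by (simp add: sum_divide_distrib mult_ac)
    also have "\<dots> = (\<Sum>i=1..n. w i * (-1/(a - al i))^s)"
    proof (rule sum.cong[OF refl])
      fix i assume i: "i \<in> {1..n}"
      define D where "D = eps i * (a - al i)"
      have p: "D > 0" using pos i D_def by auto
      have e0: "eps i \<noteq> 0" using eps i by force
      have h1: "D powr (-(1/2) - real s) = 1 / sqrt D / D ^ s"
        using p by (simp add: powr_diff powr_minus_divide powr_half_sqrt powr_realpow)
      have h3: "eps i / D = 1 / (a - al i)" using e0 unfolding D_def by simp
      have h2: "(-1)^s * eps i ^ s / D ^ s = (-1/(a - al i))^s"
        by (simp add: power_divide[symmetric] power_mult_distrib[symmetric] h3)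
      show "xi i * ((-1)^s * eps i ^ s) * (eps i * (a - al i)) powr (-(1/2) - real s)
            = w i * (-1/(a - al i))^s"
        unfolding D_def[symmetric] h1 w_def h2[symmetric] by simp
    qed
    finally show ?thesis .
  qed
  have FG: "F \<circ>\<^sub>p [:a, 1:] = [:a - al i, 1:] * Gt i" if i: "i \<in> {1..n}" for i
  proof -
    have hF: "F = [:- al i, 1:] * G i" unfolding F_def G_def
      by (rule prod.remove) (use i in auto)
    have L: "[:- al i, 1:] \<circ>\<^sub>p [:a, 1:] = [:a - al i, 1::real:]" by (simp add: pcompose_pCons)
    show ?thesis unfolding Gt_def hF pcompose_mult L ..
  qed
  have hB: "bcoef F x m a = (\<Sum>i=1..n. w i * (- coeff (Gt i) (m-1)))" if m: "1 \<le> m" for m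
  proof -
    have "bcoef F x m a = (\<Sum>s=1..m. coeff (F \<circ>\<^sub>p [:a, 1:]) (m-s) * (\<Sum>i=1..n. w i * (-1/(a - al i))^s))"
      unfolding bcoef_def T1 by (intro sum.cong refl) (simp only: times_divide_eq_right[symmetric] hE)
    also have "\<dots> = (\<Sum>i=1..n. w i * (\<Sum>s=1..m. coeff (F \<circ>\<^sub>p [:a, 1:]) (m-s) * (-1/(a - al i))^s))"
      by (simp add: sum_distrib_left mult_ac, rule sum.swap)
    also have "\<dots> = (\<Sum>i=1..n. w i * (- coeff (Gt i) (m-1)))"
    proof (rule sum.cong[OF refl])
      fix i assume i: "i \<in> {1..n}"
      have "a - al i \<noteq> 0" using pos i by force
      then show "w i * (\<Sum>s=1..m. coeff (F \<circ>\<^sub>p [:a, 1:]) (m-s) * (-1/(a - al i))^s) = w i * (- coeff (Gt i) (m-1))"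
        unfolding FG[OF i] using claimT2[OF _ m] by simp
    qed
    finally show ?thesis .
  qed
  have degG: "degree (G i) \<le> n - 1" if i: "i \<in> {1..n}" for i
  proof -
    have "degree (G i) \<le> sum (degree \<circ> (\<lambda>l. [:- al l, 1::real:])) ({1..n} - {i})"
      unfolding G_def by (rule degree_prod_sum_le) simp
    also have "\<dots> = n - 1" using i by simp
    finally show ?thesis .
  qed
  have k1: "1 \<le> k" "k \<le> n" using k by auto
  have "btilde n F x k a = (\<Sum>s=1..k. real ((n - s) choose (k - s)) * (- a) ^ (k - s)
                        * (\<Sum>i=1..n. w i * (- coeff (Gt i) (n-s))))"
    unfolding btilde_def by (intro sum.cong refl) (simp add: hB)
  also have "\<dots> = - (\<Sum>i=1..n. w i * (\<Sum>s=1..k. real ((n - s) choose (k - s)) * (- a) ^ (k - s)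
                        * coeff (Gt i) (n-s)))"
    by (simp add: sum_distrib_left mult_ac sum_negf, rule sum.swap)
  also have "\<dots> = - (\<Sum>i=1..n. w i * coeff (G i) (n-k))"
    unfolding Gt_def using claimC[OF degG k1] by simp
  also have "\<dots> = (-1) ^ k * (\<Sum>i=1..n. w i * sigma n al i (k - 1))"
  proof -
    obtain k' where kk: "k = Suc k'" using k1 by (cases k) auto
    have "sigma n al i (k - 1) = (-1)^(k-1) * coeff (G i) (n-k)" for i
      unfolding sigma_def G_def using k1 by (simp add: Suc_diff_le)
    then show ?thesis unfolding kk by (simp add: sum_distrib_left sum_negf mult_ac)
  qed
  finally show ?thesis unfolding F_def x_def w_def .
qed


theorem proposition9:
  shows
   "(\<forall>(n::nat) (F::real poly) (x::real \<Rightarrow> real) (S::real set) (a::real) (Pi::real) (Py::real).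
       n \<ge> 2 \<and> degree F = n \<and> lead_coeff F = 1 \<and> open S \<and> a \<in> S \<and>
       (\<forall>j. \<forall>t\<in>S. (deriv ^^ j) x differentiable (at t)) \<longrightarrow>
       (\<Sum>k=1..n. bcoef F x k a * Pi ^ (2*k - 1) * Py ^ (2*(n - k) + 1))
       = (\<Sum>k=1..n. btilde n F x k a * (Pi\<^sup>2 + a * Py\<^sup>2) ^ (n - k) * Pi * Py ^ (2*k - 1)))
    \<and>
    (\<forall>(n::nat) (al::nat \<Rightarrow> real) (eps::nat \<Rightarrow> real) (xi::nat \<Rightarrow> real) (a::real) k.
       n \<ge> 2 \<and> inj_on al {1..n} \<and> (\<forall>i\<in>{1..n}. eps i = 1 \<or> eps i = -1) \<and>
       (\<forall>i\<in>{1..n}. eps i * (a - al i) > 0) \<and> k \<in> {1..n} \<longrightarrow>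
       btilde n (\<Prod>i\<in>{1..n}. [:- al i, 1:])
              (\<lambda>t. \<Sum>i=1..n. xi i / sqrt (eps i * (t - al i))) k a
       = (-1) ^ k * (\<Sum>i=1..n. xi i / sqrt (eps i * (a - al i)) * sigma n al i (k - 1)))"
proof (intro conjI allI impI)
  fix n :: nat and F :: "real poly" and x :: "real \<Rightarrow> real" and a Pi Py :: real
  show "(\<Sum>k=1..n. bcoef F x k a * Pi ^ (2*k - 1) * Py ^ (2*(n - k) + 1))
       = (\<Sum>k=1..n. btilde n F x k a * (Pi\<^sup>2 + a * Py\<^sup>2) ^ (n - k) * Pi * Py ^ (2*k - 1))"
    unfolding btilde_def by (rule part1)
next
  fix n :: nat and al eps xi :: "nat \<Rightarrow> real" and a :: real and k :: nat
  assume h: "n \<ge> 2 \<and> inj_on al {1..n} \<and> (\<forall>i\<in>{1..n}. eps i = 1 \<or> eps i = -1) \<and>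
       (\<forall>i\<in>{1..n}. eps i * (a - al i) > 0) \<and> k \<in> {1..n}"
  then show "btilde n (\<Prod>i\<in>{1..n}. [:- al i, 1:])
              (\<lambda>t. \<Sum>i=1..n. xi i / sqrt (eps i * (t - al i))) k a
       = (-1) ^ k * (\<Sum>i=1..n. xi i / sqrt (eps i * (a - al i)) * sigma n al i (k - 1))"
    using part2[of n eps a al k xi] by blast
qed

end
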